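(* Let $\mu_X,\mu_Y\in\mathbb{C}$, $\sigma_X,\sigma_Y>0$ and $\rho\in\mathbb{C}$ with $|\rho|\le 1$. Let $(V_X,V_Y)$ be a zero-mean, jointly circularly-symmetric complex Gaussian random vector with $V_X\sim\mathcal{CN}(0,\sigma_X^2)$, $V_Y\sim\mathcal{CN}(0,\sigma_Y^2)$ and $\mathbb{E}[V_XV_Y^*]=\rho\sigma_X\sigma_Y$. Put $X=\mu_X+V_X$, $Y=\mu_Y+V_Y$ and $\mathcal{P}=XY^*$. For integers $t\ge 0$ and $0\le i,j\le t$ define the ordered lists $$A_{t,i}=(\underbrace{V_X,\dots,V_X}_{i},\underbrace{V_Y,\dots,V_Y}_{t-i}),\qquad B_{t,j}=(\underbrace{V_X^*,\dots,V_X^*}_{t-j},\underbrace{V_Y^*,\dots,V_Y^*}_{j}),$$ and write $A_{t,i}^{(k)}$, $B_{t,j}^{(k)}$ for their $k$-th entries. Then for all integers $m,n\ge 0$ the joint moment $\mathcal{M}_{m,n}=\mathbb{E}[\mathcal{P}^m(\mathcal{P}^n)^*]$ equals $$\mathcal{M}_{m,n}=\sum_{t=0}^{m+n}\sum_{i=0}^{t}\sum_{j=0}^{t}\binom{m}{i}\binom{m}{j}\binom{n}{t-j}\binom{n}{t-i}\,\mu_X^{m-i}\,(\mu_Y^{m-j})^*\,(\mu_X^{n-t+j})^*\,\mu_Y^{n-t+i}\sum_{\pi\in\Omega_t}\prod_{k=1}^{t}\mathbb{E}\big[A_{t,i}^{(\pi(k))}B_{t,j}^{(k)}\big],$$ where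 $\Omega_t$ is the set of all $t!$ permutations $\pi$ of $\{1,\dots,t\}$ (for $t=0$ the inner sum is $1$).
   Context: $\mathcal{CN}(0,\sigma^2)$ denotes the zero-mean circularly-symmetric complex Gaussian distribution with $\mathbb{E}|V|^2=\sigma^2$; $(\cdot)^*$ is complex conjugation. Binomial coefficients $\binom{a}{b}$ are taken to be $0$ when $b<0$ or $b>a$. *)

theory Defs
  imports "HOL-Probability.Probability"
begin

text \<open>(VX, VY) is a zero-mean jointly circularly-symmetric complex Gaussian vector with
  E|VX|^2 = sX^2, E|VY|^2 = sY^2 and E[VX * cnj VY] = rho * sX * sY.
  Defined through the characteristic function of the underlying real 4-vector
  (Re VX, Im VX, Re VY, Im VY): for all complex a, b the scalar
  W = cnj a * VX + cnj b * VY is CN(0, s) with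
  s = |a|^2 sX^2 + |b|^2 sY^2 + 2 Re(cnj a * b * rho) sX sY, i.e.
  E[exp(i Re W)] = exp(-s/4).  This also covers the degenerate case |rho| = 1.\<close>
definition jointly_cscg ::
  "'a measure \<Rightarrow> ('a \<Rightarrow> complex) \<Rightarrow> ('a \<Rightarrow> complex) \<Rightarrow> real \<Rightarrow> real \<Rightarrow> complex \<Rightarrow> bool" where
  "jointly_cscg M VX VY sX sY rho \<longleftrightarrow>
     VX \<in> borel_measurable M \<and> VY \<in> borel_measurable M \<and>
     (\<forall>a b :: complex.
        (LINT \<omega>|M. cis (Re (cnj a * VX \<omega> + cnj b * VY \<omega>))) =
        complex_of_real (exp (- ((cmod a)\<^sup>2 * sX\<^sup>2 + (cmod b)\<^sup>2 * sY\<^sup>2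
                                 + 2 * Re (cnj a * b * rho) * sX * sY) / 4)))"

text \<open>The ordered lists A_{t,i} and B_{t,j}, 0-indexed (entry k for k < t).\<close>
definition listA :: "('a \<Rightarrow> complex) \<Rightarrow> ('a \<Rightarrow> complex) \<Rightarrow> nat \<Rightarrow> nat \<Rightarrow> nat \<Rightarrow> 'a \<Rightarrow> complex" where
  "listA VX VY t i k = (if k < i then VX else VY)"

definition listB :: "('a \<Rightarrow> complex) \<Rightarrow> ('a \<Rightarrow> complex) \<Rightarrow> nat \<Rightarrow> nat \<Rightarrow> nat \<Rightarrow> 'a \<Rightarrow> complex" where
  "listB VX VY t j k = (if k < t - j then (\<lambda>\<omega>. cnj (VX \<omega>)) else (\<lambda>\<omega>. cnj (VY \<omega>)))"

end

theory Submission
  imports Defs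
begin



lemma borel_measurable_cnj[measurable (raw)]:
  "f \<in> borel_measurable M \<Longrightarrow> (\<lambda>x. cnj (f x :: complex)) \<in> borel_measurable M"
  by (rule borel_measurable_continuous_on[where f=cnj]) (rule linear_continuous_on[OF bounded_linear_cnj])

lemma char_eq_int: "char M t = (CLINT x|M. iexp (t * x))" by (simp add: char_def)

lemma std_prob: "prob_space std_normal_distribution"
  using prob_space_normal_density by auto

lemma real_moment:
  fixes M :: "'a measure" and R :: "'a \<Rightarrow> real" and \<sigma> :: real
  assumes P: "prob_space M" and R: "R \<in> borel_measurable M" and sg: "\<sigma> \<ge> 0"
  and ch: "\<And>s. (CLINT \<omega>|M. iexp (s * R \<omega>)) = complex_of_real (exp (- ((s * \<sigma>)^2) / 2))"
  shows "integrable M (\<lambda>\<omega>. R \<omega> ^ k) \<and> integrable M (\<lambda>\<omega>. \<bar>R \<omega>\<bar> ^ k) \<and>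
     (LINT \<omega>|M. R \<omega> ^ k) = \<sigma>^k * (LINT x|std_normal_distribution. x^k)"
proof (cases "\<sigma> = 0")
  case True
  have rd1: "real_distribution (distr M borel R)"
    by (simp add: real_distribution_def real_distribution_axioms_def prob_space.prob_space_distr[OF P R])
  have rd2: "real_distribution (return borel (0::real))"
    by (simp add: real_distribution_def real_distribution_axioms_def prob_space_return)
  have "char (distr M borel R) = char (return borel 0)"
  proof
    fix t
    have "char (distr M borel R) t = (CLINT \<omega>|M. iexp (t * R \<omega>))"
      unfolding char_eq_int by (rule integral_distr[OF R]) measurable
    also have "\<dots> = 1" using ch[of t] True by simp
    also have "\<dots> = char (return borel 0) t" unfolding char_eq_int
      by (subst integral_return) auto
    finally show "char (distr M borel R) t = char (return borel 0) t" .
  qed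
  hence D: "distr M borel R = return borel 0" by (rule Levy_uniqueness[OF rd1 rd2])
  have fm: "finite_measure (return borel (0::real))"
    using prob_space_return[of 0 borel] prob_space_def by auto
  have i1: "integrable M (\<lambda>\<omega>. R \<omega> ^ k)"
  proof -
    have "integrable (distr M borel R) (\<lambda>x. x ^ k)" unfolding D
      by (rule finite_measure.integrable_const_bound[OF fm, where B=1]) (auto simp: AE_return power_0_left)
    thus ?thesis by (subst (asm) integrable_distr_eq[OF R]) auto
  qed
  have i2: "integrable M (\<lambda>\<omega>. \<bar>R \<omega>\<bar> ^ k)"
  proof -
    have "integrable (distr M borel R) (\<lambda>x. \<bar>x\<bar> ^ k)" unfolding D
      by (rule finite_measure.integrable_const_bound[OF fm, where B=1]) (auto simp: AE_return power_0_left)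
    thus ?thesis by (subst (asm) integrable_distr_eq[OF R]) auto
  qed
  have "(LINT \<omega>|M. R \<omega> ^ k) = (LINT x|distr M borel R. x ^ k)"
    by (rule integral_distr[symmetric, OF R]) measurable
  also have "\<dots> = 0 ^ k" unfolding D by (subst integral_return) auto
  also have "\<dots> = \<sigma>^k * (LINT x|std_normal_distribution. x^k)"
    using True prob_space.prob_space[OF std_prob] by (cases k) auto
  finally show ?thesis using i1 i2 by auto
next
  case False
  hence sp: "\<sigma> > 0" using sg by auto
  define S where "S = (\<lambda>\<omega>. R \<omega> / \<sigma>)"
  have S: "S \<in> borel_measurable M" unfolding S_def using R by measurable
  have rd1: "real_distribution (distr M borel S)"
    by (simp add: real_distribution_def real_distribution_axioms_def prob_space.prob_space_distr[OF P S])
  have rd2: "real_distribution std_normal_distribution" by (rule real_dist_normal_dist)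
  have "char (distr M borel S) = char std_normal_distribution"
  proof
    fix t
    have "char (distr M borel S) t = (CLINT \<omega>|M. iexp (t * S \<omega>))"
      unfolding char_eq_int by (rule integral_distr[OF S]) measurable
    also have "\<dots> = (CLINT \<omega>|M. iexp ((t/\<sigma>) * R \<omega>))" unfolding S_def by simp
    also have "\<dots> = complex_of_real (exp (- (t^2) / 2))" using ch[of "t/\<sigma>"] sp
      by (simp add: power_divide)
    also have "\<dots> = char std_normal_distribution t" by (simp add: char_std_normal_distribution)
    finally show "char (distr M borel S) t = char std_normal_distribution t" .
  qed
  hence D: "distr M borel S = std_normal_distribution" by (rule Levy_uniqueness[OF rd1 rd2])
  have iS: "integrable M (\<lambda>\<omega>. S \<omega> ^ k)"
  proof -
    have "integrable (distr M borel S) (\<lambda>x. x ^ k)" unfolding D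
      by (rule integrable_std_normal_distribution_moment)
    thus ?thesis by (subst (asm) integrable_distr_eq[OF S]) auto
  qed
  have RS: "\<And>\<omega>. R \<omega> = \<sigma> * S \<omega>" unfolding S_def using sp by simp
  have i1: "integrable M (\<lambda>\<omega>. R \<omega> ^ k)"
    unfolding RS power_mult_distrib by (intro integrable_mult_right iS)
  have i2: "integrable M (\<lambda>\<omega>. \<bar>R \<omega>\<bar> ^ k)"
    using integrable_abs[OF i1] by (simp add: power_abs)
  have "(LINT \<omega>|M. R \<omega> ^ k) = \<sigma>^k * (LINT \<omega>|M. S \<omega> ^ k)"
    unfolding RS power_mult_distrib by simp
  also have "(LINT \<omega>|M. S \<omega> ^ k) = (LINT x|distr M borel S. x ^ k)"
    by (rule integral_distr[symmetric, OF S]) measurable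
  finally show ?thesis using i1 i2 D by auto
qed

locale cg =
  fixes M :: "'a measure" and VX VY :: "'a \<Rightarrow> complex" and sX sY :: real and rho :: complex
  assumes P: "prob_space M" and sXp: "sX > 0" and sYp: "sY > 0" and rh: "cmod rho \<le> 1"
    and J: "jointly_cscg M VX VY sX sY rho"
begin

lemma VXm[measurable]: "VX \<in> borel_measurable M" using J unfolding jointly_cscg_def by auto
lemma VYm[measurable]: "VY \<in> borel_measurable M" using J unfolding jointly_cscg_def by auto

definition L :: "complex \<times> complex \<Rightarrow> 'a \<Rightarrow> complex" where
  "L u \<omega> = fst u * VX \<omega> + snd u * VY \<omega>"

lemma Lm[measurable]: "L u \<in> borel_measurable M" unfolding L_def by measurable

definition vr :: "complex \<times> complex \<Rightarrow> real" where
  "vr u = (cmod (fst u))\<^sup>2 * sX\<^sup>2 + (cmod (snd u))\<^sup>2 * sY\<^sup>2 + 2 * Re (fst u * cnj (snd u) * rho) * sX * sY"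

lemma vr_nonneg: "vr u \<ge> 0"
proof -
  have "\<bar>Re (fst u * cnj (snd u) * rho)\<bar> \<le> cmod (fst u * cnj (snd u) * rho)" by (rule abs_Re_le_cmod)
  also have "\<dots> = cmod (fst u) * cmod (snd u) * cmod rho" by (simp add: norm_mult)
  also have "\<dots> \<le> cmod (fst u) * cmod (snd u)" using rh
    by (simp add: mult_left_le)
  finally have h: "\<bar>Re (fst u * cnj (snd u) * rho)\<bar> \<le> cmod (fst u) * cmod (snd u)" .
  have "0 \<le> (cmod (fst u) * sX - cmod (snd u) * sY)\<^sup>2" by simp
  also have "\<dots> = (cmod (fst u))\<^sup>2 * sX\<^sup>2 + (cmod (snd u))\<^sup>2 * sY\<^sup>2 - 2 * (cmod (fst u) * cmod (snd u)) * sX * sY"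
    by (simp add: power2_eq_square algebra_simps)
  also have "\<dots> \<le> vr u" unfolding vr_def
  proof -
    have "- (cmod (fst u) * cmod (snd u)) * (sX * sY) \<le> Re (fst u * cnj (snd u) * rho) * (sX * sY)"
      using h sXp sYp by (intro mult_right_mono) auto
    thus "(cmod (fst u))\<^sup>2 * sX\<^sup>2 + (cmod (snd u))\<^sup>2 * sY\<^sup>2 - 2 * (cmod (fst u) * cmod (snd u)) * sX * sY
      \<le> (cmod (fst u))\<^sup>2 * sX\<^sup>2 + (cmod (snd u))\<^sup>2 * sY\<^sup>2 + 2 * Re (fst u * cnj (snd u) * rho) * sX * sY"
      by (simp add: algebra_simps)
  qed
  finally show ?thesis .
qed

lemma char_L: "(CLINT \<omega>|M. iexp (s * Re (L u \<omega>))) = complex_of_real (exp (- ((s * sqrt (vr u / 2))^2) / 2))"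
proof -
  have j: "(LINT \<omega>|M. cis (Re (cnj a * VX \<omega> + cnj b * VY \<omega>))) =
        complex_of_real (exp (- ((cmod a)\<^sup>2 * sX\<^sup>2 + (cmod b)\<^sup>2 * sY\<^sup>2
                                 + 2 * Re (cnj a * b * rho) * sX * sY) / 4))" for a b
    using J unfolding jointly_cscg_def by blast
  note j2 = j[of "cnj (of_real s * fst u)" "cnj (of_real s * snd u)"]
  have e1: "cnj (cnj (of_real s * fst u)) * VX \<omega> + cnj (cnj (of_real s * snd u)) * VY \<omega> = of_real s * L u \<omega>" for \<omega>
    by (simp add: L_def algebra_simps)
  have e2: "cis (Re (of_real s * L u \<omega>)) = iexp (s * Re (L u \<omega>))" for \<omega>
    by (simp add: cis_conv_exp)
  have e3: "- ((cmod (cnj (of_real s * fst u)))\<^sup>2 * sX\<^sup>2 + (cmod (cnj (of_real s * snd u)))\<^sup>2 * sY\<^sup>2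
              + 2 * Re (cnj (cnj (of_real s * fst u)) * cnj (of_real s * snd u) * rho) * sX * sY) / 4
     = - ((s * sqrt (vr u / 2))^2) / 2"
  proof -
    have r: "Re (cnj (cnj (of_real s * fst u)) * cnj (of_real s * snd u) * rho) = s^2 * Re (fst u * cnj (snd u) * rho)"
      by (simp add: power2_eq_square algebra_simps)
    have q: "(s * sqrt (vr u / 2))^2 = s^2 * (vr u / 2)" using vr_nonneg[of u]
      by (simp add: power_mult_distrib)
    have w: "- ((cmod (cnj (of_real s * fst u)))\<^sup>2 * sX\<^sup>2 + (cmod (cnj (of_real s * snd u)))\<^sup>2 * sY\<^sup>2
              + 2 * Re (cnj (cnj (of_real s * fst u)) * cnj (of_real s * snd u) * rho) * sX * sY) / 4
      = - (s^2 * vr u) / 4"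
      unfolding r vr_def by (simp add: norm_mult power_mult_distrib algebra_simps)
    show ?thesis unfolding w q by simp
  qed
  show ?thesis using j2 unfolding e1 e2 e3 .
qed

lemma mom_L: "integrable M (\<lambda>\<omega>. Re (L u \<omega>) ^ k) \<and> integrable M (\<lambda>\<omega>. \<bar>Re (L u \<omega>)\<bar> ^ k) \<and>
     (LINT \<omega>|M. Re (L u \<omega>) ^ k) = sqrt (vr u / 2) ^ k * (LINT x|std_normal_distribution. x^k)"
  by (rule real_moment[OF P _ _ char_L]) (auto simp: vr_nonneg)

lemma pow4_bound:
  fixes a b c d :: real
  assumes "a \<ge> 0" "b \<ge> 0" "c \<ge> 0" "d \<ge> 0"
  shows "(a + b + c + d) ^ n \<le> 4 ^ n * (a ^ n + b ^ n + c ^ n + d ^ n)"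
proof -
  define m where "m = max (max a b) (max c d)"
  have "a + b + c + d \<le> 4 * m" unfolding m_def by linarith
  hence "(a + b + c + d) ^ n \<le> (4 * m) ^ n" using assms by (intro power_mono) auto
  also have "\<dots> = 4 ^ n * m ^ n" by (simp add: power_mult_distrib)
  also have "m ^ n \<le> a ^ n + b ^ n + c ^ n + d ^ n"
  proof -
    have "m = a \<or> m = b \<or> m = c \<or> m = d" unfolding m_def by linarith
    moreover have "0 \<le> a ^ n" "0 \<le> b ^ n" "0 \<le> c ^ n" "0 \<le> d ^ n" using assms by auto
    ultimately show ?thesis by auto
  qed
  hence "4 ^ n * m ^ n \<le> 4 ^ n * (a ^ n + b ^ n + c ^ n + d ^ n)" by simp
  finally show ?thesis .
qed

lemma int_S: "integrable M (\<lambda>\<omega>. (cmod (VX \<omega>) + cmod (VY \<omega>)) ^ n)"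
proof -
  define x1 where "x1 = (\<lambda>\<omega>. Re (L (1,0) \<omega>))"
  define x2 where "x2 = (\<lambda>\<omega>. Re (L (-\<i>,0) \<omega>))"
  define y1 where "y1 = (\<lambda>\<omega>. Re (L (0,1) \<omega>))"
  define y2 where "y2 = (\<lambda>\<omega>. Re (L (0,-\<i>) \<omega>))"
  have ex: "cmod (VX \<omega>) \<le> \<bar>x1 \<omega>\<bar> + \<bar>x2 \<omega>\<bar>" for \<omega>
    using cmod_le[of "VX \<omega>"] by (simp add: x1_def x2_def L_def)
  have ey: "cmod (VY \<omega>) \<le> \<bar>y1 \<omega>\<bar> + \<bar>y2 \<omega>\<bar>" for \<omega>
    using cmod_le[of "VY \<omega>"] by (simp add: y1_def y2_def L_def)
  have i: "integrable M (\<lambda>\<omega>. 4 ^ n * (\<bar>x1 \<omega>\<bar> ^ n + \<bar>x2 \<omega>\<bar> ^ n + \<bar>y1 \<omega>\<bar> ^ n + \<bar>y2 \<omega>\<bar> ^ n))"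
    unfolding x1_def x2_def y1_def y2_def using mom_L by (intro integrable_mult_right integrable_add) auto
  show ?thesis
  proof (rule Bochner_Integration.integrable_bound[OF i])
    show "(\<lambda>\<omega>. (cmod (VX \<omega>) + cmod (VY \<omega>)) ^ n) \<in> borel_measurable M" by measurable
    show "AE \<omega> in M. norm ((cmod (VX \<omega>) + cmod (VY \<omega>)) ^ n)
        \<le> norm (4 ^ n * (\<bar>x1 \<omega>\<bar> ^ n + \<bar>x2 \<omega>\<bar> ^ n + \<bar>y1 \<omega>\<bar> ^ n + \<bar>y2 \<omega>\<bar> ^ n))"
    proof (intro AE_I2)
      fix \<omega>
      have "(cmod (VX \<omega>) + cmod (VY \<omega>)) ^ n \<le> (\<bar>x1 \<omega>\<bar> + \<bar>x2 \<omega>\<bar> + \<bar>y1 \<omega>\<bar> + \<bar>y2 \<omega>\<bar>) ^ n"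
        using ex[of \<omega>] ey[of \<omega>] by (intro power_mono) auto
      also have "\<dots> \<le> 4 ^ n * (\<bar>x1 \<omega>\<bar> ^ n + \<bar>x2 \<omega>\<bar> ^ n + \<bar>y1 \<omega>\<bar> ^ n + \<bar>y2 \<omega>\<bar> ^ n)"
        by (rule pow4_bound) auto
      finally show "norm ((cmod (VX \<omega>) + cmod (VY \<omega>)) ^ n)
        \<le> norm (4 ^ n * (\<bar>x1 \<omega>\<bar> ^ n + \<bar>x2 \<omega>\<bar> ^ n + \<bar>y1 \<omega>\<bar> ^ n + \<bar>y2 \<omega>\<bar> ^ n))"
        by simp
    qed
  qed
qed

definition nu :: "complex \<times> complex \<Rightarrow> real" where "nu u = cmod (fst u) + cmod (snd u)"

lemma norm_L: "cmod (L u \<omega>) \<le> nu u * (cmod (VX \<omega>) + cmod (VY \<omega>))"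
proof -
  have "cmod (L u \<omega>) \<le> cmod (fst u) * cmod (VX \<omega>) + cmod (snd u) * cmod (VY \<omega>)"
    unfolding L_def by (metis norm_mult norm_triangle_ineq)
  also have "\<dots> \<le> nu u * (cmod (VX \<omega>) + cmod (VY \<omega>))"
    unfolding nu_def by (simp add: algebra_simps)
  finally show ?thesis .
qed

definition integrand :: "nat \<Rightarrow> (nat \<Rightarrow> complex \<times> complex) \<Rightarrow> nat \<Rightarrow> (nat \<Rightarrow> complex \<times> complex) \<Rightarrow> 'a \<Rightarrow> complex" where
  "integrand a A b B \<omega> = (\<Prod>k<a. L (A k) \<omega>) * (\<Prod>k<b. cnj (L (B k) \<omega>))"

lemma integrand_m[measurable]: "integrand a A b B \<in> borel_measurable M"
  unfolding integrand_def by measurable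

lemma integrable_integrand: "integrable M (integrand a A b B)"
proof -
  define C where "C = (\<Prod>k<a. nu (A k)) * (\<Prod>k<b. nu (B k))"
  have i: "integrable M (\<lambda>\<omega>. C * (cmod (VX \<omega>) + cmod (VY \<omega>)) ^ (a + b))"
    by (intro integrable_mult_right int_S)
  show ?thesis
  proof (rule Bochner_Integration.integrable_bound[OF i integrand_m], intro AE_I2)
    fix \<omega>
    let ?S = "cmod (VX \<omega>) + cmod (VY \<omega>)"
    have nn: "0 \<le> nu u" for u unfolding nu_def by simp
    have "cmod (integrand a A b B \<omega>) = (\<Prod>k<a. cmod (L (A k) \<omega>)) * (\<Prod>k<b. cmod (L (B k) \<omega>))"
      unfolding integrand_def by (simp add: norm_mult prod_norm[symmetric])
    also have "\<dots> \<le> (\<Prod>k<a. nu (A k) * ?S) * (\<Prod>k<b. nu (B k) * ?S)"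
      by (intro mult_mono prod_mono conjI norm_L prod_nonneg) (auto simp: nn)
    also have "\<dots> = C * ?S ^ (a + b)"
      unfolding C_def by (simp only: prod.distrib prod_constant power_add card_lessThan mult_ac)
    finally show "norm (integrand a A b B \<omega>) \<le> norm (C * ?S ^ (a + b))"
      by (simp add: C_def nn prod_nonneg)
  qed
qed

end



lemma roots_sum:
  fixes N :: nat and d :: int
  assumes N: "N > 0" and d: "\<bar>d\<bar> < int N"
  shows "(\<Sum>m<N. cis (2 * pi * of_int d * real m / real N)) = (if d = 0 then of_nat N else 0)"
proof (cases "d = 0")
  case True thus ?thesis by simp
next
  case False
  define w where "w = cis (2 * pi * of_int d / real N)"
  have pw: "cis (2 * pi * of_int d * real m / real N) = w ^ m" for m
    unfolding w_def Complex.DeMoivre by (simp add: algebra_simps)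
  have w1: "w \<noteq> 1"
  proof
    assume "w = 1"
    hence "exp (\<i> * complex_of_real (2 * pi * of_int d / real N)) = 1" unfolding w_def cis_conv_exp .
    then obtain n :: int where n: "2 * pi * of_int d / real N = of_int (2 * n) * pi"
      unfolding exp_eq_1 by auto
    hence "of_int d = real N * of_int n" using N by (simp add: field_simps)
    hence "d = int N * n" by (metis of_int_eq_iff of_int_mult of_int_of_nat_eq)
    hence "n \<noteq> 0" using False by auto
    hence "1 \<le> \<bar>n\<bar>" by simp
    hence "int N * 1 \<le> int N * \<bar>n\<bar>" by (intro mult_left_mono) auto
    thus False using d \<open>d = int N * n\<close> by (simp add: abs_mult)
  qed
  have wN: "w ^ N = 1"
  proof -
    have "w ^ N = cis (real N * (2 * pi * of_int d / real N))" unfolding w_def Complex.DeMoivre ..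
    also have "\<dots> = cis (2 * pi * of_int d)" using N by simp
    also have "\<dots> = 1" by (rule cis_multiple_2pi) simp
    finally show ?thesis .
  qed
  have "(\<Sum>m<N. cis (2 * pi * of_int d * real m / real N)) = (\<Sum>m<N. w ^ m)" by (simp add: pw)
  also have "\<dots> = 0" using geometric_sum[OF w1, of N] wN by simp
  finally show ?thesis using False by simp
qed

lemma dft_extract:
  fixes e :: "nat \<Rightarrow> complex" and k :: nat and K :: complex
  assumes H: "\<And>\<theta>. (\<Sum>j\<le>k. e j * cis ((2 * real j - real k) * \<theta>)) = K" and j0: "j0 \<le> k"
  shows "e j0 = (if 2 * j0 = k then K else 0)"
proof -
  define N where "N = 2 * k + 1"
  have N: "N > 0" unfolding N_def by simp
  define th where "th m = 2 * pi * real m / real N" for m :: nat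
  have "(\<Sum>m<N. cis (- (2 * real j0 - real k) * th m) * K)
      = (\<Sum>m<N. \<Sum>j\<le>k. e j * cis (2 * pi * of_int (2 * (int j - int j0)) * real m / real N))"
  proof (rule sum.cong[OF refl])
    fix m
    have "cis (- (2 * real j0 - real k) * th m) * K
       = (\<Sum>j\<le>k. e j * (cis ((2 * real j - real k) * th m) * cis (- (2 * real j0 - real k) * th m)))"
      unfolding H[of "th m", symmetric] by (simp add: sum_distrib_left mult_ac)
    also have "\<dots> = (\<Sum>j\<le>k. e j * cis (2 * pi * of_int (2 * (int j - int j0)) * real m / real N))"
      unfolding cis_mult th_def by (intro sum.cong refl arg_cong2[where f="(*)"] arg_cong[where f=cis])
        (use N in \<open>simp add: field_simps\<close>)
    finally show "cis (- (2 * real j0 - real k) * th m) * K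
      = (\<Sum>j\<le>k. e j * cis (2 * pi * of_int (2 * (int j - int j0)) * real m / real N))" .
  qed
  also have "\<dots> = (\<Sum>j\<le>k. e j * (\<Sum>m<N. cis (2 * pi * of_int (2 * (int j - int j0)) * real m / real N)))"
    by (subst sum.swap) (simp add: sum_distrib_left)
  also have "\<dots> = (\<Sum>j\<le>k. e j * (if j = j0 then of_nat N else 0))"
  proof (rule sum.cong[OF refl])
    fix j assume "j \<in> {..k}"
    hence "\<bar>2 * (int j - int j0)\<bar> < int N" using j0 unfolding N_def by auto
    thus "e j * (\<Sum>m<N. cis (2 * pi * of_int (2 * (int j - int j0)) * real m / real N)) =
      e j * (if j = j0 then of_nat N else 0)"
      by (subst roots_sum[OF N]) auto
  qed
  also have "\<dots> = (\<Sum>j\<le>k. if j = j0 then e j * of_nat N else 0)" by (rule sum.cong) auto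
  also have "\<dots> = e j0 * of_nat N" using j0 by (simp add: sum.delta)
  finally have A: "(\<Sum>m<N. cis (- (2 * real j0 - real k) * th m) * K) = e j0 * of_nat N" .
  have "(\<Sum>m<N. cis (- (2 * real j0 - real k) * th m) * K)
     = K * (\<Sum>m<N. cis (2 * pi * of_int (int k - 2 * int j0) * real m / real N))"
    unfolding th_def by (simp add: sum_distrib_left algebra_simps)
  also have "\<dots> = K * (if int k - 2 * int j0 = 0 then of_nat N else 0)"
    using j0 by (subst roots_sum[OF N]) (auto simp: N_def)
  finally have B: "(\<Sum>m<N. cis (- (2 * real j0 - real k) * th m) * K) = K * (if 2 * j0 = k then of_nat N else 0)"
    by auto
  hence "e j0 * of_nat N = K * (if 2 * j0 = k then of_nat N else 0)" using A by simp
  thus ?thesis using N by (cases "2 * j0 = k") auto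
qed




context cg begin

lemma L_scale: "L (c * fst u, c * snd u) \<omega> = c * L u \<omega>"
  unfolding L_def by (simp add: algebra_simps)

lemma vr_scale: "cmod c = 1 \<Longrightarrow> vr (c * fst u, c * snd u) = vr u"
proof -
  assume c: "cmod c = 1"
  have "c * fst u * cnj (c * snd u) * rho = (c * cnj c) * (fst u * cnj (snd u) * rho)" by (simp add: algebra_simps)
  also have "c * cnj c = 1" using c by (simp add: complex_norm_square[symmetric])
  finally have eq: "c * fst u * cnj (c * snd u) * rho = fst u * cnj (snd u) * rho" by simp
  have "vr (c * fst u, c * snd u) = (cmod (c * fst u))\<^sup>2 * sX\<^sup>2 + (cmod (c * snd u))\<^sup>2 * sY\<^sup>2 + 2 * Re (c * fst u * cnj (c * snd u) * rho) * sX * sY"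
    by (simp add: vr_def)
  also have "\<dots> = vr u" unfolding eq using c by (simp add: vr_def norm_mult)
  finally show ?thesis .
qed

lemma prod_const_L: "(\<Prod>k<a. L u \<omega>) = L u \<omega> ^ a" by simp

lemma int_Lpow: "integrable M (\<lambda>\<omega>. L u \<omega> ^ p * cnj (L u \<omega>) ^ q)"
  using integrable_integrand[of p "\<lambda>_. u" q "\<lambda>_. u"] unfolding integrand_def by simp

lemma diag: "(LINT \<omega>|M. L u \<omega> ^ p * cnj (L u \<omega>) ^ q) = (if p = q then fact p * complex_of_real (vr u) ^ p else 0)"
proof -
  define k where "k = p + q"
  define e where "e j = of_nat (k choose j) * (LINT \<omega>|M. L u \<omega> ^ j * cnj (L u \<omega>) ^ (k - j))" for j
  define K where "K = complex_of_real (2 ^ k * (sqrt (vr u / 2) ^ k * (LINT x|std_normal_distribution. x^k)))"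
  have H: "(\<Sum>j\<le>k. e j * cis ((2 * real j - real k) * \<theta>)) = K" for \<theta>
  proof -
    define c where "c = cis \<theta>"
    define cu where "cu = (c * fst u, c * snd u)"
    have c1: "cmod c = 1" unfolding c_def by simp
    have pw: "c ^ j * cnj c ^ (k - j) = cis ((2 * real j - real k) * \<theta>)" if "j \<le> k" for j
    proof -
      have "c ^ j * cnj c ^ (k - j) = cis (real j * \<theta>) * cis (real (k - j) * (- \<theta>))"
        unfolding c_def cis_cnj Complex.DeMoivre by simp
      also have "\<dots> = cis ((2 * real j - real k) * \<theta>)" unfolding cis_mult using that
        by (simp add: of_nat_diff algebra_simps)
      finally show ?thesis .
    qed
    have pt: "complex_of_real ((2 * Re (L cu \<omega>)) ^ k) =
       (\<Sum>j\<le>k. cis ((2 * real j - real k) * \<theta>) * of_nat (k choose j) * (L u \<omega> ^ j * cnj (L u \<omega>) ^ (k - j)))" for \<omega>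
    proof -
      have "complex_of_real ((2 * Re (L cu \<omega>)) ^ k) = (c * L u \<omega> + cnj (c * L u \<omega>)) ^ k"
        unfolding cu_def L_scale complex_add_cnj by simp
      also have "\<dots> = (\<Sum>j\<le>k. of_nat (k choose j) * (c * L u \<omega>) ^ j * (cnj (c * L u \<omega>)) ^ (k - j))"
        by (rule binomial_ring)
      also have "\<dots> = (\<Sum>j\<le>k. (c ^ j * cnj c ^ (k - j)) * of_nat (k choose j) * (L u \<omega> ^ j * cnj (L u \<omega>) ^ (k - j)))"
        by (simp add: power_mult_distrib algebra_simps)
      also have "\<dots> = (\<Sum>j\<le>k. cis ((2 * real j - real k) * \<theta>) * of_nat (k choose j) * (L u \<omega> ^ j * cnj (L u \<omega>) ^ (k - j)))"
        by (intro sum.cong refl) (simp add: pw)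
      finally show ?thesis .
    qed
    have "K = complex_of_real (LINT \<omega>|M. (2 * Re (L cu \<omega>)) ^ k)"
      unfolding K_def power_mult_distrib using mom_L[of cu k] vr_scale[OF c1, of u] by (simp add: cu_def)
    also have "\<dots> = (LINT \<omega>|M. complex_of_real ((2 * Re (L cu \<omega>)) ^ k))" by (simp only: integral_complex_of_real)
    also have "\<dots> = (LINT \<omega>|M. (\<Sum>j\<le>k. cis ((2 * real j - real k) * \<theta>) * of_nat (k choose j) * (L u \<omega> ^ j * cnj (L u \<omega>) ^ (k - j))))"
      unfolding pt ..
    also have "\<dots> = (\<Sum>j\<le>k. cis ((2 * real j - real k) * \<theta>) * of_nat (k choose j) * (LINT \<omega>|M. L u \<omega> ^ j * cnj (L u \<omega>) ^ (k - j)))"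
      by (subst Bochner_Integration.integral_sum[where f="\<lambda>j \<omega>. cis ((2 * real j - real k) * \<theta>) * of_nat (k choose j) * (L u \<omega> ^ j * cnj (L u \<omega>) ^ (k - j))"])
        (auto intro!: int_Lpow integrable_mult_right)
    also have "\<dots> = (\<Sum>j\<le>k. e j * cis ((2 * real j - real k) * \<theta>))"
      unfolding e_def by (simp add: mult_ac)
    finally show ?thesis ..
  qed
  have ep: "e p = (if 2 * p = k then K else 0)" by (rule dft_extract[OF H]) (simp add: k_def)
  have Cnz: "of_nat (k choose p) \<noteq> (0::complex)" by (simp add: k_def)
  show ?thesis
  proof (cases "p = q")
    case False
    hence "e p = 0" using ep k_def by auto
    thus ?thesis using Cnz False by (simp add: e_def k_def)
  next
    case True
    have kk: "k = 2 * p" "k - p = p" using True k_def by auto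
    have v0: "vr u \<ge> 0" by (rule vr_nonneg)
    have R: "2 ^ k * (sqrt (vr u / 2) ^ k * (LINT x|std_normal_distribution. x^k))
      = real (k choose p) * (fact p * vr u ^ p)"
    proof -
      have s: "sqrt (vr u / 2) ^ (2 * p) = (vr u / 2) ^ p" unfolding power_mult using v0 by simp
      have m: "(LINT x|std_normal_distribution. x^(2 * p)) = fact (2 * p) / (2^p * fact p)"
        by (rule std_normal_distribution_even_moments(1))
      have b: "real ((2 * p) choose p) = fact (2*p) / (fact p * fact p)"
        by (subst binomial_fact) auto
      have t: "(2::real) ^ (2 * p) = 2 ^ p * 2 ^ p" by (simp add: power_add[symmetric] mult_2)
      show ?thesis unfolding kk(1) s m b t by (simp add: power_divide field_simps)
    qed
    have "of_nat (k choose p) * (LINT \<omega>|M. L u \<omega> ^ p * cnj (L u \<omega>) ^ q)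
        = of_nat (k choose p) * (fact p * complex_of_real (vr u) ^ p)"
      using ep kk True unfolding e_def K_def R by simp
    thus ?thesis using Cnz True by simp
  qed
qed

end



lemma poly_coeff:
  fixes S :: "'s set" and d :: "'s \<Rightarrow> nat" and h :: "'s \<Rightarrow> complex"
  assumes fin: "finite S" and H: "\<And>s::real. (\<Sum>x\<in>S. complex_of_real s ^ d x * h x) = 0"
  shows "(\<Sum>x\<in>{x\<in>S. d x = n}. h x) = 0"
proof -
  define N where "N = Max (insert 0 (d ` S))"
  have dN: "x \<in> S \<Longrightarrow> d x \<le> N" for x unfolding N_def using fin by (intro Max_ge) auto
  define c where "c m = (\<Sum>x\<in>{x\<in>S. d x = m}. h x)" for m
  have P: "(\<Sum>m\<le>N. c m * complex_of_real s ^ m) = 0" for s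
  proof -
    have "(\<Sum>m\<le>N. c m * complex_of_real s ^ m) = (\<Sum>m\<le>N. (\<Sum>x\<in>{x\<in>S. d x = m}. complex_of_real s ^ d x * h x))"
    proof (intro sum.cong refl)
      fix m
      have "(\<Sum>x\<in>{x\<in>S. d x = m}. complex_of_real s ^ d x * h x) = (\<Sum>x\<in>{x\<in>S. d x = m}. complex_of_real s ^ m * h x)"
        by (intro sum.cong refl) auto
      thus "c m * complex_of_real s ^ m = (\<Sum>x\<in>{x\<in>S. d x = m}. complex_of_real s ^ d x * h x)"
        unfolding c_def by (simp add: sum_distrib_left mult_ac)
    qed
    also have "\<dots> = (\<Sum>x\<in>S. complex_of_real s ^ d x * h x)"
      by (rule sum.group) (use fin dN in auto)
    finally show ?thesis using H by simp
  qed
  have PR: "(\<Sum>m\<le>N. Re (c m) * s ^ m) = 0" for s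
    using arg_cong[OF P[of s], of Re] by (simp add: Re_sum)
  have PI: "(\<Sum>m\<le>N. Im (c m) * s ^ m) = 0" for s
    using arg_cong[OF P[of s], of Im] by (simp add: Im_sum)
  have "\<forall>m\<le>N. Re (c m) = 0" using polyfun_eq_0[of "\<lambda>m. Re (c m)" N] PR by blast
  moreover have "\<forall>m\<le>N. Im (c m) = 0" using polyfun_eq_0[of "\<lambda>m. Im (c m)" N] PI by blast
  ultimately have c0: "m \<le> N \<Longrightarrow> c m = 0" for m by (simp add: complex_eq_iff)
  show ?thesis
  proof (cases "n \<le> N")
    case True thus ?thesis using c0 unfolding c_def by auto
  next
    case False
    hence "{x\<in>S. d x = n} = {}" using dN by fastforce
    thus ?thesis by (simp only: sum.empty)
  qed
qed

lemma card1_sum: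
  assumes "finite I"
  shows "(\<Sum>J\<in>{J\<in>Pow I. card J = 1}. g J) = (\<Sum>j\<in>I. g {j})"
proof -
  have "{J\<in>Pow I. card J = 1} = (\<lambda>j. {j}) ` I" by (auto simp: card_1_singleton_iff)
  moreover have "inj_on (\<lambda>j. {j}) I" by (auto simp: inj_on_def)
  ultimately show ?thesis by (simp add: sum.reindex)
qed

lemma card1_pair_sum:
  assumes "finite I" "finite I'"
  shows "(\<Sum>x\<in>{x\<in>Pow I \<times> Pow I'. card (fst x) + card (snd x) = 1}. g x)
     = (\<Sum>j\<in>I. g ({j}, {})) + (\<Sum>k\<in>I'. g ({}, {k}))"
proof -
  have fa: "finite J" if "J \<in> Pow I" for J using that assms finite_subset by auto
  have fb: "finite K" if "K \<in> Pow I'" for K using that assms finite_subset by auto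
  have "{x\<in>Pow I \<times> Pow I'. card (fst x) + card (snd x) = 1} = (\<lambda>j. ({j}, {})) ` I \<union> (\<lambda>k. ({}, {k})) ` I'"
  proof (intro equalityI subsetI)
    fix x assume x: "x \<in> {x\<in>Pow I \<times> Pow I'. card (fst x) + card (snd x) = 1}"
    obtain J K where xe: "x = (J, K)" by (cases x)
    have JK: "J \<in> Pow I" "K \<in> Pow I'" "card J + card K = 1" using x xe by auto
    have "(card J = 1 \<and> card K = 0) \<or> (card J = 0 \<and> card K = 1)" using JK(3) by arith
    thus "x \<in> (\<lambda>j. ({j}, {})) ` I \<union> (\<lambda>k. ({}, {k})) ` I'"
      using JK fa[OF JK(1)] fb[OF JK(2)] unfolding xe by (auto simp: card_1_singleton_iff)
  qed auto
  moreover have "inj_on (\<lambda>j. ({j}, {}::'b set)) I" by (auto simp: inj_on_def)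
  moreover have "inj_on (\<lambda>k. ({}::'a set, {k})) I'" by (auto simp: inj_on_def)
  moreover have "(\<lambda>j. ({j}, {}::'b set)) ` I \<inter> (\<lambda>k. ({}::'a set, {k})) ` I' = {}" by auto
  ultimately show ?thesis using assms by (simp add: sum.union_disjoint sum.reindex)
qed

lemma expand:
  fixes \<Phi> :: "(nat \<Rightarrow> 'v) \<Rightarrow> complex" and f :: "'v \<Rightarrow> 'v \<Rightarrow> 'v"
  assumes lin: "\<And>w i p q. i \<in> I0 \<Longrightarrow> \<Phi> (w(i := f p q)) = \<Phi> (w(i := p)) + \<zeta> * \<Phi> (w(i := q))"
    and fin: "finite I" and sub: "I \<subseteq> I0"
  shows "\<Phi> (\<lambda>i. if i \<in> I then f u x else w i)
      = (\<Sum>J\<in>Pow I. \<zeta> ^ card J * \<Phi> (\<lambda>i. if i \<in> J then x else if i \<in> I then u else w i))"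
  using fin sub
proof (induction I arbitrary: w rule: finite_induct)
  case empty thus ?case by simp
next
  case (insert i I)
  define w' where "w' = w(i := f u x)"
  have "\<Phi> (\<lambda>k. if k \<in> insert i I then f u x else w k) = \<Phi> (\<lambda>k. if k \<in> I then f u x else w' k)"
    unfolding w'_def by (intro arg_cong[where f=\<Phi>]) auto
  also have "\<dots> = (\<Sum>J\<in>Pow I. \<zeta> ^ card J * \<Phi> (\<lambda>k. if k \<in> J then x else if k \<in> I then u else w' k))"
    using insert by auto
  also have "\<dots> = (\<Sum>J\<in>Pow I. \<zeta> ^ card J * (\<Phi> (\<lambda>k. if k \<in> J then x else if k \<in> insert i I then u else w k)
        + \<zeta> * \<Phi> (\<lambda>k. if k \<in> insert i J then x else if k \<in> insert i I then u else w k)))"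
  proof (intro sum.cong refl arg_cong2[where f="(*)"])
    fix J assume J: "J \<in> Pow I"
    define g where "g = (\<lambda>k. if k \<in> J then x else if k \<in> I then u else w k)"
    have "(\<lambda>k. if k \<in> J then x else if k \<in> I then u else w' k) = g(i := f u x)"
      using J insert(2) unfolding g_def w'_def by (auto simp: fun_eq_iff)
    moreover have "g(i := u) = (\<lambda>k. if k \<in> J then x else if k \<in> insert i I then u else w k)"
      using J insert(2) unfolding g_def by (auto simp: fun_eq_iff)
    moreover have "g(i := x) = (\<lambda>k. if k \<in> insert i J then x else if k \<in> insert i I then u else w k)"
      using J insert(2) unfolding g_def by (auto simp: fun_eq_iff)
    ultimately show "\<Phi> (\<lambda>k. if k \<in> J then x else if k \<in> I then u else w' k) =
      \<Phi> (\<lambda>k. if k \<in> J then x else if k \<in> insert i I then u else w k) +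
      \<zeta> * \<Phi> (\<lambda>k. if k \<in> insert i J then x else if k \<in> insert i I then u else w k)"
      using lin[of i g u x] insert(4) by simp
  qed
  also have "\<dots> = (\<Sum>J\<in>Pow I. \<zeta> ^ card J * \<Phi> (\<lambda>k. if k \<in> J then x else if k \<in> insert i I then u else w k))
     + (\<Sum>J\<in>Pow I. \<zeta> ^ card (insert i J) * \<Phi> (\<lambda>k. if k \<in> insert i J then x else if k \<in> insert i I then u else w k))"
  proof -
    have "card (insert i J) = Suc (card J)" if "J \<in> Pow I" for J
      using that insert(1,2) finite_subset by (subst card_insert_disjoint) auto
    thus ?thesis by (simp add: sum.distrib algebra_simps)
  qed
  also have "\<dots> = (\<Sum>J\<in>Pow (insert i I). \<zeta> ^ card J * \<Phi> (\<lambda>k. if k \<in> J then x else if k \<in> insert i I then u else w k))"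
  proof -
    have inj: "inj_on (insert i) (Pow I)" using insert(2) by (auto simp: inj_on_def)
    have disj: "Pow I \<inter> insert i ` Pow I = {}" using insert(2) by auto
    show ?thesis unfolding Pow_insert
      by (subst sum.union_disjoint) (use insert(1) disj in \<open>auto simp: sum.reindex[OF inj]\<close>)
  qed
  finally show ?case .
qed

lemma swap_pattern:
  assumes "r \<in> I" "j \<in> I"
  shows "(\<lambda>i. if i \<in> {j} then x else if i \<in> I then u else w i) \<circ> Transposition.transpose r j
       = (\<lambda>i. if i \<in> {r} then x else if i \<in> I then u else w i)"
  using assms by (auto simp: fun_eq_iff Transposition.transpose_def)

lemma polarize:
  fixes H :: "nat \<Rightarrow> (nat \<Rightarrow> 'v) \<Rightarrow> nat \<Rightarrow> (nat \<Rightarrow> 'v) \<Rightarrow> complex" and f :: "'v \<Rightarrow> complex \<Rightarrow> 'v \<Rightarrow> 'v" and A B :: "nat \<Rightarrow> 'v"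
  assumes linA: "\<And>a A b B i p z q. i < a \<Longrightarrow> H a (A(i := f p z q)) b B = H a (A(i:=p)) b B + z * H a (A(i:=q)) b B"
  and linB: "\<And>a A b B i p z q. i < b \<Longrightarrow> H a A b (B(i := f p z q)) = H a A b (B(i:=p)) + cnj z * H a A b (B(i:=q))"
  and symA: "\<And>a A b B \<sigma>. \<sigma> permutes {..<a} \<Longrightarrow> H a (A \<circ> \<sigma>) b B = H a A b B"
  and symB: "\<And>a A b B \<sigma>. \<sigma> permutes {..<b} \<Longrightarrow> H a A b (B \<circ> \<sigma>) = H a A b B"
  and cong: "\<And>a A A' b B B'. (\<And>i. i < a \<Longrightarrow> A i = A' i) \<Longrightarrow> (\<And>i. i < b \<Longrightarrow> B i = B' i) \<Longrightarrow> H a A b B = H a A' b B'"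
  and dg: "\<And>a b u. H a (\<lambda>_. u) b (\<lambda>_. u) = 0"
  shows "H a A b B = 0"
proof -
  have PA: "\<And>(u::'v) (A::nat \<Rightarrow> 'v). (\<forall>i. r \<le> i \<and> i < a \<longrightarrow> A i = u) \<Longrightarrow> H a A b (\<lambda>_. u) = 0" for r
  proof (induction r)
    case 0
    fix u :: 'v and A :: "nat \<Rightarrow> 'v" assume h: "\<forall>i. 0 \<le> i \<and> i < a \<longrightarrow> A i = u"
    have "H a A b (\<lambda>_. u) = H a (\<lambda>_. u) b (\<lambda>_. u)" by (rule cong) (use h in auto)
    thus "H a A b (\<lambda>_. u) = 0" using dg by simp
  next
    case (Suc r)
    fix u :: 'v and A :: "nat \<Rightarrow> 'v" assume h: "\<forall>i. Suc r \<le> i \<and> i < a \<longrightarrow> A i = u"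
    show "H a A b (\<lambda>_. u) = 0"
    proof (cases "r < a")
      case False
      thus ?thesis using Suc.IH h by auto
    next
      case True
      define x where "x = A r"
      define IA where "IA = {r..<a}"
      define IB where "IB = {..<b::nat}"
      have fIA: "finite IA" and fIB: "finite IB" unfolding IA_def IB_def by auto
      define AJ where "AJ J = (\<lambda>i. if i \<in> J then x else if i \<in> IA then u else A i)" for J
      define BK where "BK K = (\<lambda>i. if i \<in> K then x else if i \<in> IB then u else u)" for K
      define h where "h JK = H a (AJ (fst JK)) b (BK (snd JK))" for JK
      have E: "(\<Sum>JK\<in>Pow IA \<times> Pow IB. z ^ card (fst JK) * cnj z ^ card (snd JK) * h JK) = 0" for z
      proof -
        have "0 = H a (\<lambda>i. if i \<in> IA then f u z x else A i) b (\<lambda>_. f u z x)"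
          by (rule Suc.IH[symmetric]) (auto simp: IA_def)
        also have "\<dots> = H a (\<lambda>i. if i \<in> IA then f u z x else A i) b (\<lambda>i. if i \<in> IB then f u z x else u)"
          by (rule cong) (auto simp: IB_def)
        also have "\<dots> = (\<Sum>J\<in>Pow IA. z ^ card J * H a (AJ J) b (\<lambda>i. if i \<in> IB then f u z x else u))"
        proof -
          have l: "H a (w(i := f p z q)) b (\<lambda>i. if i \<in> IB then f u z x else u) =
            H a (w(i := p)) b (\<lambda>i. if i \<in> IB then f u z x else u) + z * H a (w(i := q)) b (\<lambda>i. if i \<in> IB then f u z x else u)"
            if "i \<in> IA" for w i p q by (rule linA) (use that in \<open>auto simp: IA_def\<close>)
          show ?thesis unfolding AJ_def
            by (rule expand[where \<Phi>="\<lambda>A'. H a A' b (\<lambda>i. if i \<in> IB then f u z x else u)" and f="\<lambda>p q. f p z q", OF l fIA subset_refl])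
        qed
        also have "\<dots> = (\<Sum>J\<in>Pow IA. z ^ card J * (\<Sum>K\<in>Pow IB. cnj z ^ card K * H a (AJ J) b (BK K)))"
        proof (intro sum.cong refl arg_cong2[where f="(*)"])
          fix J
          have l: "H a (AJ J) b (w(i := f p z q)) = H a (AJ J) b (w(i := p)) + cnj z * H a (AJ J) b (w(i := q))"
            if "i \<in> IB" for w i p q by (rule linB) (use that in \<open>auto simp: IB_def\<close>)
          show "H a (AJ J) b (\<lambda>i. if i \<in> IB then f u z x else u) = (\<Sum>K\<in>Pow IB. cnj z ^ card K * H a (AJ J) b (BK K))"
            unfolding BK_def
            by (rule expand[where \<Phi>="\<lambda>B'. H a (AJ J) b B'" and f="\<lambda>p q. f p z q", OF l fIB subset_refl])
        qed
        also have "\<dots> = (\<Sum>J\<in>Pow IA. \<Sum>K\<in>Pow IB. z ^ card J * cnj z ^ card K * h (J, K))"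
          unfolding h_def by (simp add: sum_distrib_left mult_ac)
        also have "\<dots> = (\<Sum>JK\<in>Pow IA \<times> Pow IB. z ^ card (fst JK) * cnj z ^ card (snd JK) * h JK)"
          by (subst sum.cartesian_product) (simp add: case_prod_beta)
        finally show ?thesis by simp
      qed
      define X where "X = (\<Sum>j\<in>IA. h ({j}, {}))"
      define Y where "Y = (\<Sum>k\<in>IB. h ({}, {k}))"
      have fP: "finite (Pow IA \<times> Pow IB)" using fIA fIB by auto
      have XY1: "X + Y = 0"
      proof -
        have "(\<Sum>x\<in>{x\<in>Pow IA \<times> Pow IB. card (fst x) + card (snd x) = 1}. h x) = 0"
        proof (rule poly_coeff[OF fP])
          fix s :: real
          show "(\<Sum>x\<in>Pow IA \<times> Pow IB. complex_of_real s ^ (card (fst x) + card (snd x)) * h x) = 0"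
            using E[of "complex_of_real s"] by (simp add: power_add)
        qed
        thus ?thesis unfolding X_def Y_def card1_pair_sum[OF fIA fIB] .
      qed
      have XY2: "\<i> * X - \<i> * Y = 0"
      proof -
        have "(\<Sum>x\<in>{x\<in>Pow IA \<times> Pow IB. card (fst x) + card (snd x) = 1}. \<i> ^ card (fst x) * (- \<i>) ^ card (snd x) * h x) = 0"
        proof (rule poly_coeff[OF fP])
          fix s :: real
          have "(\<Sum>x\<in>Pow IA \<times> Pow IB. complex_of_real s ^ (card (fst x) + card (snd x)) * (\<i> ^ card (fst x) * (- \<i>) ^ card (snd x) * h x))
            = (\<Sum>x\<in>Pow IA \<times> Pow IB. (\<i> * complex_of_real s) ^ card (fst x) * cnj (\<i> * complex_of_real s) ^ card (snd x) * h x)"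
          proof (intro sum.cong refl)
            fix x :: "nat set \<times> nat set"
            have "(- (\<i> * complex_of_real s)) ^ card (snd x) = (- \<i>) ^ card (snd x) * complex_of_real s ^ card (snd x)"
              by (simp add: power_mult_distrib[symmetric])
            thus "complex_of_real s ^ (card (fst x) + card (snd x)) * (\<i> ^ card (fst x) * (- \<i>) ^ card (snd x) * h x) =
              (\<i> * complex_of_real s) ^ card (fst x) * cnj (\<i> * complex_of_real s) ^ card (snd x) * h x"
              by (simp add: power_add power_mult_distrib mult_ac)
          qed
          also have "\<dots> = 0" by (rule E)
          finally show "(\<Sum>x\<in>Pow IA \<times> Pow IB. complex_of_real s ^ (card (fst x) + card (snd x)) * (\<i> ^ card (fst x) * (- \<i>) ^ card (snd x) * h x)) = 0" .
        qed
        thus ?thesis unfolding X_def Y_def card1_pair_sum[OF fIA fIB]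
          by (simp add: sum_distrib_left sum_negf eq_neg_iff_add_eq_0)
      qed
      have X0: "X = 0"
      proof -
        have "\<i> * X + \<i> * X = \<i> * (X + Y) + (\<i> * X - \<i> * Y)" by (simp add: algebra_simps)
        also have "\<dots> = 0" using XY1 XY2 by simp
        finally show ?thesis by simp
      qed
      have rIA: "r \<in> IA" unfolding IA_def using True by auto
      have hj: "h ({j}, {}) = h ({r}, {})" if j: "j \<in> IA" for j
      proof -
        have tp: "Transposition.transpose r j permutes {..<a}" using j rIA unfolding IA_def by (intro permutes_swap_id) auto
        have eq: "AJ {j} \<circ> Transposition.transpose r j = AJ {r}"
          unfolding AJ_def by (rule swap_pattern[OF rIA j])
        have "h ({r}, {}) = H a (AJ {j} \<circ> Transposition.transpose r j) b (BK {})"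
          unfolding h_def eq by simp
        also have "\<dots> = h ({j}, {})" unfolding h_def by (simp add: symA[OF tp])
        finally show ?thesis ..
      qed
      have "X = of_nat (card IA) * h ({r}, {})" unfolding X_def using hj by simp
      moreover have "card IA > 0" using True unfolding IA_def by simp
      ultimately have hr: "h ({r}, {}) = 0" using X0 by simp
      have "H a A b (\<lambda>_. u) = h ({r}, {})" unfolding h_def
      proof (rule cong)
        fix i assume "i < a"
        thus "A i = AJ (fst ({r}, {})) i" unfolding AJ_def IA_def x_def using h by auto
      qed (simp add: BK_def)
      thus ?thesis using hr by simp
    qed
  qed
  have PB: "\<And>(A::nat \<Rightarrow> 'v) (u::'v) (B::nat \<Rightarrow> 'v). (\<forall>i. r \<le> i \<and> i < b \<longrightarrow> B i = u) \<Longrightarrow> H a A b B = 0" for r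
  proof (induction r)
    case 0
    fix A :: "nat \<Rightarrow> 'v" and u :: 'v and B :: "nat \<Rightarrow> 'v" assume h: "\<forall>i. 0 \<le> i \<and> i < b \<longrightarrow> B i = u"
    have "H a A b B = H a A b (\<lambda>_. u)" by (rule cong) (use h in auto)
    moreover have "H a A b (\<lambda>_. u) = 0" by (rule PA[of a A u]) auto
    ultimately show "H a A b B = 0" by simp
  next
    case (Suc r)
    fix A :: "nat \<Rightarrow> 'v" and u :: 'v and B :: "nat \<Rightarrow> 'v" assume h: "\<forall>i. Suc r \<le> i \<and> i < b \<longrightarrow> B i = u"
    show "H a A b B = 0"
    proof (cases "r < b")
      case False
      show ?thesis by (rule Suc.IH[of B u A]) (use False in auto)
    next
      case True
      define x where "x = B r"
      define IB where "IB = {r..<b}"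
      have fIB: "finite IB" unfolding IB_def by auto
      define BK where "BK K = (\<lambda>i. if i \<in> K then x else if i \<in> IB then u else B i)" for K
      define h where "h K = H a A b (BK K)" for K
      have E: "(\<Sum>K\<in>Pow IB. complex_of_real s ^ card K * h K) = 0" for s
      proof -
        have "0 = H a A b (\<lambda>i. if i \<in> IB then f u (complex_of_real s) x else B i)"
          by (rule Suc.IH[symmetric]) (auto simp: IB_def)
        also have "\<dots> = (\<Sum>K\<in>Pow IB. cnj (complex_of_real s) ^ card K * h K)"
        proof -
          have l: "H a A b (w(i := f p (complex_of_real s) q)) = H a A b (w(i := p)) + cnj (complex_of_real s) * H a A b (w(i := q))"
            if "i \<in> IB" for w i p q by (rule linB) (use that in \<open>auto simp: IB_def\<close>)
          show ?thesis unfolding h_def BK_def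
            by (rule expand[where \<Phi>="\<lambda>B'. H a A b B'" and f="\<lambda>p q. f p (complex_of_real s) q", OF l fIB subset_refl])
        qed
        finally show ?thesis by simp
      qed
      have "(\<Sum>K\<in>{K\<in>Pow IB. card K = 1}. h K) = 0"
        by (rule poly_coeff) (use fIB E in auto)
      hence X0: "(\<Sum>k\<in>IB. h {k}) = 0" unfolding card1_sum[OF fIB] .
      have rIB: "r \<in> IB" unfolding IB_def using True by auto
      have hj: "h {j} = h {r}" if j: "j \<in> IB" for j
      proof -
        have tp: "Transposition.transpose r j permutes {..<b}" using j rIB unfolding IB_def by (intro permutes_swap_id) auto
        have eq: "BK {j} \<circ> Transposition.transpose r j = BK {r}"
          unfolding BK_def by (rule swap_pattern[OF rIB j])
        have "h {r} = H a A b (BK {j} \<circ> Transposition.transpose r j)"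
          unfolding h_def eq by simp
        also have "\<dots> = h {j}" unfolding h_def by (simp add: symB[OF tp])
        finally show ?thesis ..
      qed
      have "(\<Sum>k\<in>IB. h {k}) = of_nat (card IB) * h {r}" using hj by simp
      moreover have "card IB > 0" using True unfolding IB_def by simp
      ultimately have hr: "h {r} = 0" using X0 by simp
      have "H a A b B = h {r}" unfolding h_def
      proof (rule cong)
        fix i assume "i < b"
        thus "B i = BK {r} i" unfolding BK_def IB_def x_def using h by auto
      qed simp
      thus ?thesis using hr by simp
    qed
  qed
  show ?thesis by (rule PB[of b]) auto
qed




lemma prod_upd:
  assumes "finite S" "i \<in> S"
  shows "(\<Prod>k\<in>S. g ((A(i := v)) k)) = g v * (\<Prod>k\<in>S - {i}. g (A k))"
proof -
  have "(\<Prod>k\<in>S. g ((A(i := v)) k)) = g ((A(i := v)) i) * (\<Prod>k\<in>S - {i}. g ((A(i := v)) k))"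
    by (rule prod.remove[OF assms])
  also have "(\<Prod>k\<in>S - {i}. g ((A(i := v)) k)) = (\<Prod>k\<in>S - {i}. g (A k))"
    by (intro prod.cong) auto
  finally show ?thesis by simp
qed

lemma prod_pi_upd:
  assumes p: "\<pi> permutes {..<a}" and i: "i < (a::nat)"
  shows "(\<Prod>k<a. g ((A(i := v)) (\<pi> k)) k) = g v (inv \<pi> i) * (\<Prod>k\<in>{..<a} - {inv \<pi> i}. g (A (\<pi> k)) k)"
proof -
  define k0 where "k0 = inv \<pi> i"
  have pk0: "\<pi> k0 = i" unfolding k0_def using permutes_inverses(1)[OF p] by simp
  have k0a: "k0 \<in> {..<a}" unfolding k0_def using permutes_in_image[OF permutes_inv[OF p]] i by auto
  have "(\<Prod>k<a. g ((A(i := v)) (\<pi> k)) k) = g ((A(i := v)) (\<pi> k0)) k0 * (\<Prod>k\<in>{..<a} - {k0}. g ((A(i := v)) (\<pi> k)) k)"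
    by (rule prod.remove[OF _ k0a]) simp
  also have "(\<Prod>k\<in>{..<a} - {k0}. g ((A(i := v)) (\<pi> k)) k) = (\<Prod>k\<in>{..<a} - {k0}. g (A (\<pi> k)) k)"
  proof (intro prod.cong refl)
    fix k assume "k \<in> {..<a} - {k0}"
    hence "\<pi> k \<noteq> i" using pk0 permutes_inj[OF p] unfolding inj_def by auto
    thus "g ((A(i := v)) (\<pi> k)) k = g (A (\<pi> k)) k" by simp
  qed
  finally show ?thesis using pk0 unfolding k0_def by simp
qed

context cg begin

definition lc :: "complex \<times> complex \<Rightarrow> complex \<Rightarrow> complex \<times> complex \<Rightarrow> complex \<times> complex" where
  "lc p z q = (fst p + z * fst q, snd p + z * snd q)"

definition cv :: "complex \<times> complex \<Rightarrow> complex \<times> complex \<Rightarrow> complex" where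
  "cv u w = fst u * cnj (fst w) * complex_of_real (sX^2) + fst u * cnj (snd w) * (rho * sX * sY)
     + snd u * cnj (fst w) * (cnj rho * sX * sY) + snd u * cnj (snd w) * complex_of_real (sY^2)"

definition F :: "nat \<Rightarrow> (nat \<Rightarrow> complex \<times> complex) \<Rightarrow> nat \<Rightarrow> (nat \<Rightarrow> complex \<times> complex) \<Rightarrow> complex"
  where "F a A b B = (LINT \<omega>|M. integrand a A b B \<omega>)"
definition G :: "nat \<Rightarrow> (nat \<Rightarrow> complex \<times> complex) \<Rightarrow> nat \<Rightarrow> (nat \<Rightarrow> complex \<times> complex) \<Rightarrow> complex"
  where "G a A b B = (if a = b then (\<Sum>\<pi> | \<pi> permutes {..<a}. \<Prod>k<a. cv (A (\<pi> k)) (B k)) else 0)"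

lemma L_lc: "L (lc p z q) \<omega> = L p \<omega> + z * L q \<omega>"
  unfolding L_def lc_def by (simp add: algebra_simps)

lemma cv_lc1: "cv (lc p z q) w = cv p w + z * cv q w"
  unfolding cv_def lc_def by (simp add: algebra_simps)

lemma cv_lc2: "cv w (lc p z q) = cv w p + cnj z * cv w q"
  unfolding cv_def lc_def by (simp add: algebra_simps)

lemma cv_diag: "cv u u = complex_of_real (vr u)"
proof -
  have a: "fst u * cnj (fst u) = complex_of_real ((cmod (fst u))\<^sup>2)" by (rule complex_norm_square[symmetric])
  have b: "snd u * cnj (snd u) = complex_of_real ((cmod (snd u))\<^sup>2)" by (rule complex_norm_square[symmetric])
  have c: "fst u * cnj (snd u) * rho + snd u * cnj (fst u) * cnj rho = complex_of_real (2 * Re (fst u * cnj (snd u) * rho))"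
    using complex_add_cnj[of "fst u * cnj (snd u) * rho"] by (simp add: mult_ac)
  have "cv u u = (fst u * cnj (fst u)) * complex_of_real (sX^2) + (snd u * cnj (snd u)) * complex_of_real (sY^2)
      + (fst u * cnj (snd u) * rho + snd u * cnj (fst u) * cnj rho) * complex_of_real (sX * sY)"
    unfolding cv_def by (simp add: algebra_simps)
  also have "\<dots> = complex_of_real (vr u)" unfolding a b c vr_def by (simp add: algebra_simps)
  finally show ?thesis .
qed

lemma F_linA: "i < a \<Longrightarrow> F a (A(i := lc p z q)) b B = F a (A(i := p)) b B + z * F a (A(i := q)) b B"
proof -
  assume i: "i < a"
  have pt: "integrand a (A(i := lc p z q)) b B \<omega> = integrand a (A(i := p)) b B \<omega> + z * integrand a (A(i := q)) b B \<omega>" for \<omega>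
    unfolding integrand_def
    using prod_upd[of "{..<a}" i "\<lambda>v. L v \<omega>" A] i by (simp add: L_lc algebra_simps)
  show ?thesis unfolding F_def pt
    by (subst Bochner_Integration.integral_add) (auto intro: integrable_integrand)
qed

lemma F_linB: "i < b \<Longrightarrow> F a A b (B(i := lc p z q)) = F a A b (B(i := p)) + cnj z * F a A b (B(i := q))"
proof -
  assume i: "i < b"
  have pt: "integrand a A b (B(i := lc p z q)) \<omega> = integrand a A b (B(i := p)) \<omega> + cnj z * integrand a A b (B(i := q)) \<omega>" for \<omega>
    unfolding integrand_def
    using prod_upd[of "{..<b}" i "\<lambda>v. cnj (L v \<omega>)" B] i by (simp add: L_lc algebra_simps)
  show ?thesis unfolding F_def pt
    by (subst Bochner_Integration.integral_add) (auto intro: integrable_integrand)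
qed

lemma G_linA: "i < a \<Longrightarrow> G a (A(i := lc p z q)) b B = G a (A(i := p)) b B + z * G a (A(i := q)) b B"
proof -
  assume i: "i < a"
  have "(\<Prod>k<a. cv ((A(i := lc p z q)) (\<pi> k)) (B k)) = (\<Prod>k<a. cv ((A(i := p)) (\<pi> k)) (B k)) + z * (\<Prod>k<a. cv ((A(i := q)) (\<pi> k)) (B k))"
    if p: "\<pi> permutes {..<a}" for \<pi>
    using prod_pi_upd[OF p i, of "\<lambda>v k. cv v (B k)" A] by (simp add: cv_lc1 algebra_simps)
  hence "(\<Sum>\<pi> | \<pi> permutes {..<a}. \<Prod>k<a. cv ((A(i := lc p z q)) (\<pi> k)) (B k))
    = (\<Sum>\<pi> | \<pi> permutes {..<a}. (\<Prod>k<a. cv ((A(i := p)) (\<pi> k)) (B k)) + z * (\<Prod>k<a. cv ((A(i := q)) (\<pi> k)) (B k)))"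
    by (intro sum.cong) auto
  thus ?thesis unfolding G_def by (cases "a = b") (simp_all add: sum.distrib sum_distrib_left)
qed

lemma G_linB: "i < b \<Longrightarrow> G a A b (B(i := lc p z q)) = G a A b (B(i := p)) + cnj z * G a A b (B(i := q))"
proof -
  assume i: "i < b"
  have "(\<Prod>k<b. cv (A (\<pi> k)) ((B(i := lc p z q)) k)) = (\<Prod>k<b. cv (A (\<pi> k)) ((B(i := p)) k)) + cnj z * (\<Prod>k<b. cv (A (\<pi> k)) ((B(i := q)) k))"
    for \<pi>
  proof -
    have e: "(\<Prod>k<b. cv (A (\<pi> k)) ((B(i := v)) k)) = cv (A (\<pi> i)) v * (\<Prod>k\<in>{..<b} - {i}. cv (A (\<pi> k)) (B k))" for v
    proof -
      have "(\<Prod>k<b. cv (A (\<pi> k)) ((B(i := v)) k)) = cv (A (\<pi> i)) ((B(i := v)) i) * (\<Prod>k\<in>{..<b} - {i}. cv (A (\<pi> k)) ((B(i := v)) k))"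
        by (rule prod.remove) (use i in auto)
      also have "(\<Prod>k\<in>{..<b} - {i}. cv (A (\<pi> k)) ((B(i := v)) k)) = (\<Prod>k\<in>{..<b} - {i}. cv (A (\<pi> k)) (B k))"
        by (intro prod.cong) auto
      finally show ?thesis by simp
    qed
    show ?thesis unfolding e by (simp add: cv_lc2 algebra_simps)
  qed
  thus ?thesis unfolding G_def by (simp add: sum.distrib sum_distrib_left)
qed

lemma F_symA: "\<sigma> permutes {..<a} \<Longrightarrow> F a (A \<circ> \<sigma>) b B = F a A b B"
  unfolding F_def integrand_def
  using prod.permute[of \<sigma> "{..<a}" "\<lambda>k. L (A k) \<omega>" for \<omega>] by (simp add: o_def)

lemma F_symB: "\<sigma> permutes {..<b} \<Longrightarrow> F a A b (B \<circ> \<sigma>) = F a A b B"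
  unfolding F_def integrand_def
  using prod.permute[of \<sigma> "{..<b}" "\<lambda>k. cnj (L (B k) \<omega>)" for \<omega>] by (simp add: o_def)

lemma G_symA: "\<sigma> permutes {..<a} \<Longrightarrow> G a (A \<circ> \<sigma>) b B = G a A b B"
  unfolding G_def
  using setum_permutations_compose_left[of \<sigma> "{..<a}" "\<lambda>\<pi>. \<Prod>k<a. cv (A (\<pi> k)) (B k)"]
  by (cases "a = b") auto

lemma G_symB: "\<sigma> permutes {..<b} \<Longrightarrow> G a A b (B \<circ> \<sigma>) = G a A b B"
proof -
  assume s: "\<sigma> permutes {..<b}"
  have si: "inv \<sigma> permutes {..<b}" by (rule permutes_inv[OF s])
  have e: "(\<Prod>k<b. cv (A (\<pi> k)) (B (\<sigma> k))) = (\<Prod>k<b. cv (A ((\<pi> \<circ> inv \<sigma>) k)) (B k))" for \<pi>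
  proof -
    have "(\<Prod>k<b. cv (A ((\<pi> \<circ> inv \<sigma>) k)) (B k)) = (\<Prod>k<b. cv (A ((\<pi> \<circ> inv \<sigma>) (\<sigma> k))) (B (\<sigma> k)))"
      using prod.permute[OF s, of "\<lambda>k. cv (A ((\<pi> \<circ> inv \<sigma>) k)) (B k)"] by (simp add: o_def)
    also have "\<dots> = (\<Prod>k<b. cv (A (\<pi> k)) (B (\<sigma> k)))"
      using permutes_inverses(2)[OF s] by simp
    finally show ?thesis ..
  qed
  show ?thesis unfolding G_def
    using sum_permutations_compose_right[OF si, of "\<lambda>\<pi>. \<Prod>k<b. cv (A (\<pi> k)) (B k)"] e by simp
qed

lemma F_cong: "(\<And>i. i < a \<Longrightarrow> A i = A' i) \<Longrightarrow> (\<And>i. i < b \<Longrightarrow> B i = B' i) \<Longrightarrow> F a A b B = F a A' b B'"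
  unfolding F_def integrand_def by (intro arg_cong[where f="integral\<^sup>L M"] ext arg_cong2[where f="(*)"] prod.cong) auto

lemma G_cong: "(\<And>i. i < a \<Longrightarrow> A i = A' i) \<Longrightarrow> (\<And>i. i < b \<Longrightarrow> B i = B' i) \<Longrightarrow> G a A b B = G a A' b B'"
proof -
  assume hA: "\<And>i. i < a \<Longrightarrow> A i = A' i" and hB: "\<And>i. i < b \<Longrightarrow> B i = B' i"
  have "(\<Prod>k<a. cv (A (\<pi> k)) (B k)) = (\<Prod>k<a. cv (A' (\<pi> k)) (B' k))" if p: "\<pi> permutes {..<a}" and ab: "a = b" for \<pi>
  proof (intro prod.cong refl)
    fix k assume "k \<in> {..<a}"
    moreover hence "\<pi> k < a" using permutes_in_image[OF p] by auto
    ultimately show "cv (A (\<pi> k)) (B k) = cv (A' (\<pi> k)) (B' k)" using hA hB ab by auto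
  qed
  thus ?thesis unfolding G_def by (auto intro!: sum.cong)
qed

lemma FG_diag: "F a (\<lambda>_. u) b (\<lambda>_. u) = G a (\<lambda>_. u) b (\<lambda>_. u)"
proof -
  have "F a (\<lambda>_. u) b (\<lambda>_. u) = (LINT \<omega>|M. L u \<omega> ^ a * cnj (L u \<omega>) ^ b)"
    unfolding F_def integrand_def by simp
  also have "\<dots> = (if a = b then fact a * complex_of_real (vr u) ^ a else 0)" by (rule diag)
  also have "\<dots> = G a (\<lambda>_. u) b (\<lambda>_. u)"
    unfolding G_def cv_diag using card_permutations[of "{..<a}" a] by (cases "a = b") auto
  finally show ?thesis .
qed

theorem F_eq_G: "F a A b B = G a A b B"
proof -
  have "(\<lambda>a A b B. F a A b B - G a A b B) a A b B = 0"
  proof (rule polarize[where f=lc])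
    show "\<And>a A b B i p z q. i < a \<Longrightarrow> F a (A(i := lc p z q)) b B - G a (A(i := lc p z q)) b B
       = F a (A(i := p)) b B - G a (A(i := p)) b B + z * (F a (A(i := q)) b B - G a (A(i := q)) b B)"
      by (simp add: F_linA G_linA algebra_simps)
    show "\<And>a A b B i p z q. i < b \<Longrightarrow> F a A b (B(i := lc p z q)) - G a A b (B(i := lc p z q))
       = F a A b (B(i := p)) - G a A b (B(i := p)) + cnj z * (F a A b (B(i := q)) - G a A b (B(i := q)))"
      by (simp add: F_linB G_linB algebra_simps)
    show "\<And>a A b B \<sigma>. \<sigma> permutes {..<a} \<Longrightarrow> F a (A \<circ> \<sigma>) b B - G a (A \<circ> \<sigma>) b B = F a A b B - G a A b B"
      by (simp add: F_symA G_symA)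
    show "\<And>a A b B \<sigma>. \<sigma> permutes {..<b} \<Longrightarrow> F a A b (B \<circ> \<sigma>) - G a A b (B \<circ> \<sigma>) = F a A b B - G a A b B"
      by (simp add: F_symB G_symB)
    show "\<And>a A A' b B B'. (\<And>i. i < a \<Longrightarrow> A i = A' i) \<Longrightarrow> (\<And>i. i < b \<Longrightarrow> B i = B' i) \<Longrightarrow>
       F a A b B - G a A b B = F a A' b B' - G a A' b B'"
      using F_cong G_cong by metis
    show "\<And>a b u. F a (\<lambda>_. u) b (\<lambda>_. u) - G a (\<lambda>_. u) b (\<lambda>_. u) = 0"
      using FG_diag by simp
  qed
  thus ?thesis by simp
qed

end



lemma sum_le_ext:
  fixes f :: "nat \<Rightarrow> 'a::comm_monoid_add"
  assumes "m \<le> N" "\<And>i. m < i \<Longrightarrow> i \<le> N \<Longrightarrow> f i = 0"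
  shows "(\<Sum>i\<le>m. f i) = (\<Sum>i\<le>N. f i)"
  by (rule sum.mono_neutral_left) (use assms in auto)

lemma sum_le_ind:
  fixes f :: "nat \<Rightarrow> 'a::comm_monoid_add"
  assumes "m \<le> N"
  shows "(\<Sum>i\<le>m. f i) = (\<Sum>i\<le>N. if i \<le> m then f i else 0)"
proof -
  have "(\<Sum>i\<le>N. if i \<le> m then f i else 0) = (\<Sum>i\<le>N. if i \<in> {..m} then f i else 0)" by simp
  also have "\<dots> = sum f ({..N} \<inter> {..m})" by (rule sum.inter_restrict[symmetric]) simp
  also have "{..N} \<inter> {..m} = {..m}" using assms by auto
  finally show ?thesis by simp
qed

lemma sum_delta_a:
  fixes g :: "nat \<Rightarrow> 'a::comm_monoid_add"
  shows "(\<Sum>a\<le>n. if i + b = a + j then g a else 0) = (if j \<le> i + b \<and> i + b - j \<le> n then g (i + b - j) else 0)"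
proof -
  have "(\<Sum>a\<le>n. if i + b = a + j then g a else 0) = (\<Sum>a\<le>n. if j \<le> i + b \<and> a = i + b - j then g a else 0)"
    by (intro sum.cong refl) auto
  also have "\<dots> = (if j \<le> i + b \<and> i + b - j \<le> n then g (i + b - j) else 0)"
    by (cases "j \<le> i + b") (simp_all add: sum.delta')
  finally show ?thesis .
qed

lemma reindex_main:
  fixes T :: "nat \<Rightarrow> nat \<Rightarrow> nat \<Rightarrow> 'a::comm_monoid_add"
  assumes zi: "\<And>t i j. m < i \<Longrightarrow> T t i j = 0"
    and zj: "\<And>t i j. m < j \<Longrightarrow> T t i j = 0"
    and zt: "\<And>t i j. i \<le> t \<Longrightarrow> n < t - i \<Longrightarrow> T t i j = 0"
  shows "(\<Sum>i\<le>m. \<Sum>j\<le>m. \<Sum>b\<le>n. if j \<le> i + b then T (i + b) i j else 0)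
       = (\<Sum>t\<le>m + n. \<Sum>i\<le>t. \<Sum>j\<le>t. T t i j)"
proof -
  define N where "N = m + n"
  have "(\<Sum>t\<le>m + n. \<Sum>i\<le>t. \<Sum>j\<le>t. T t i j)
      = (\<Sum>t\<le>N. \<Sum>i\<le>N. \<Sum>j\<le>N. if i \<le> t \<and> j \<le> t then T t i j else 0)"
    unfolding N_def
  proof (rule sum.cong[OF refl])
    fix t assume t: "t \<in> {..m + n}"
    have "(\<Sum>i\<le>t. \<Sum>j\<le>t. T t i j) = (\<Sum>i\<le>m + n. if i \<le> t then (\<Sum>j\<le>t. T t i j) else 0)"
      by (rule sum_le_ind) (use t in auto)
    also have "\<dots> = (\<Sum>i\<le>m + n. \<Sum>j\<le>m + n. if i \<le> t \<and> j \<le> t then T t i j else 0)"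
    proof (rule sum.cong[OF refl])
      fix i
      have "(\<Sum>j\<le>t. T t i j) = (\<Sum>j\<le>m + n. if j \<le> t then T t i j else 0)"
        by (rule sum_le_ind) (use t in auto)
      thus "(if i \<le> t then (\<Sum>j\<le>t. T t i j) else 0) = (\<Sum>j\<le>m + n. if i \<le> t \<and> j \<le> t then T t i j else 0)"
        by auto
    qed
    finally show "(\<Sum>i\<le>t. \<Sum>j\<le>t. T t i j) = (\<Sum>i\<le>m + n. \<Sum>j\<le>m + n. if i \<le> t \<and> j \<le> t then T t i j else 0)" .
  qed
  also have "\<dots> = (\<Sum>i\<le>N. \<Sum>j\<le>N. \<Sum>t\<le>N. if i \<le> t \<and> j \<le> t then T t i j else 0)"
    by (subst sum.swap) (subst (2) sum.swap, rule refl)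
  finally have R: "(\<Sum>t\<le>m + n. \<Sum>i\<le>t. \<Sum>j\<le>t. T t i j) = (\<Sum>i\<le>N. \<Sum>j\<le>N. \<Sum>t\<le>N. if i \<le> t \<and> j \<le> t then T t i j else 0)" .
  have "(\<Sum>i\<le>m. \<Sum>j\<le>m. \<Sum>b\<le>n. if j \<le> i + b then T (i + b) i j else 0)
      = (\<Sum>i\<le>N. \<Sum>j\<le>N. \<Sum>b\<le>N. if j \<le> i + b then T (i + b) i j else 0)"
  proof -
    have "(\<Sum>i\<le>m. \<Sum>j\<le>m. \<Sum>b\<le>n. if j \<le> i + b then T (i + b) i j else 0)
        = (\<Sum>i\<le>N. \<Sum>j\<le>m. \<Sum>b\<le>n. if j \<le> i + b then T (i + b) i j else 0)"
      by (rule sum.mono_neutral_left) (simp_all add: N_def zi not_le)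
    also have "\<dots> = (\<Sum>i\<le>N. \<Sum>j\<le>N. \<Sum>b\<le>n. if j \<le> i + b then T (i + b) i j else 0)"
      by (rule sum.cong[OF refl], rule sum.mono_neutral_left) (auto simp: N_def intro!: sum.neutral zj)
    also have "\<dots> = (\<Sum>i\<le>N. \<Sum>j\<le>N. \<Sum>b\<le>N. if j \<le> i + b then T (i + b) i j else 0)"
      by (rule sum.cong[OF refl], rule sum.cong[OF refl], rule sum.mono_neutral_left) (auto simp: N_def intro!: zt)
    finally show ?thesis .
  qed
  also have "\<dots> = (\<Sum>i\<le>N. \<Sum>j\<le>N. \<Sum>t\<le>N. if i \<le> t \<and> j \<le> t then T t i j else 0)"
  proof (rule sum.cong[OF refl], rule sum.cong[OF refl])
    fix i j
    define h where "h t = (if j \<le> t then T t i j else 0)" for t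
    have hz: "h t = 0" if "N < t" "i \<le> t" for t
    proof (cases "m < i")
      case True thus ?thesis unfolding h_def using zi by auto
    next
      case False
      hence "n < t - i" using that unfolding N_def by auto
      thus ?thesis unfolding h_def using zt[OF that(2)] by auto
    qed
    have "(\<Sum>b\<le>N. if j \<le> i + b then T (i + b) i j else 0) = (\<Sum>b\<le>N. h (b + i))"
      unfolding h_def by (intro sum.cong refl) (simp add: add.commute)
    also have "\<dots> = (\<Sum>t\<in>{i..N + i}. h t)"
      using sum.shift_bounds_cl_nat_ivl[of h 0 i N] by (simp add: atMost_atLeast0)
    also have "\<dots> = (\<Sum>t\<in>{i..N}. h t)"
    proof (cases "i \<le> N")
      case True
      show ?thesis by (rule sum.mono_neutral_right) (use hz True in auto)
    next
      case False
      have "(\<Sum>t\<in>{i..N + i}. h t) = 0" by (rule sum.neutral) (use hz False in auto)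
      thus ?thesis using False by simp
    qed
    also have "\<dots> = (\<Sum>t\<le>N. if i \<le> t \<and> j \<le> t then T t i j else 0)"
    proof -
      have "(\<Sum>t\<le>N. if i \<le> t \<and> j \<le> t then T t i j else 0) = (\<Sum>t\<le>N. if t \<in> {i..N} then h t else 0)"
        unfolding h_def by (intro sum.cong refl) auto
      also have "\<dots> = (\<Sum>t\<in>{..N} \<inter> {i..N}. h t)" by (rule sum.inter_restrict[symmetric]) simp
      also have "{..N} \<inter> {i..N} = {i..N}" by auto
      finally show ?thesis by simp
    qed
    finally show "(\<Sum>b\<le>N. if j \<le> i + b then T (i + b) i j else 0) = (\<Sum>t\<le>N. if i \<le> t \<and> j \<le> t then T t i j else 0)" .
  qed
  finally show ?thesis using R by simp
qed




lemma prod_split_if: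
  fixes x y :: "'c::comm_monoid_mult"
  shows "(\<Prod>k<i + b. if k < i then x else y) = x ^ i * y ^ b"
proof (induction b)
  case 0
  have "(\<Prod>k<i. if k < i then x else y) = (\<Prod>k<i. x)" by (intro prod.cong) auto
  thus ?case by simp
next
  case (Suc b)
  have "(\<Prod>k<i + Suc b. if k < i then x else y) = (\<Prod>k<i + b. if k < i then x else y) * y"
    by simp
  thus ?case using Suc by (simp add: mult_ac)
qed

theorem proposition1:
  fixes M :: "'a measure" and VX VY :: "'a \<Rightarrow> complex"
    and muX muY rho :: complex and sX sY :: real and m n :: nat
  assumes "prob_space M"
    and "sX > 0" and "sY > 0" and "cmod rho \<le> 1"
    and "jointly_cscg M VX VY sX sY rho"
  shows "(LINT \<omega>|M. ((muX + VX \<omega>) * cnj (muY + VY \<omega>)) ^ m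
                     * cnj (((muX + VX \<omega>) * cnj (muY + VY \<omega>)) ^ n)) =
    (\<Sum>t\<le>m + n. \<Sum>i\<le>t. \<Sum>j\<le>t.
       of_nat ((m choose i) * (m choose j) * (n choose (t - j)) * (n choose (t - i)))
       * muX ^ (m - i) * cnj (muY ^ (m - j)) * cnj (muX ^ (n + j - t)) * muY ^ (n + i - t)
       * (\<Sum>\<pi> | \<pi> permutes {..<t}.
            \<Prod>k<t. (LINT \<omega>|M. listA VX VY t i (\<pi> k) \<omega> * listB VX VY t j k \<omega>)))"
proof -
  interpret C: cg M VX VY sX sY rho by (rule cg.intro) (rule assms)+
  define eX where "eX = ((1::complex), (0::complex))"
  define eY where "eY = ((0::complex), (1::complex))"
  define Av where "Av i = (\<lambda>k::nat. if k < i then eX else eY)" for i :: nat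
  define Bv where "Bv a = (\<lambda>k::nat. if k < a then eX else eY)" for a :: nat
  have LX: "C.L eX \<omega> = VX \<omega>" and LY: "C.L eY \<omega> = VY \<omega>" for \<omega>
    unfolding C.L_def eX_def eY_def by simp_all
  have LA: "C.L (Av i k) \<omega> = (if k < i then VX \<omega> else VY \<omega>)" for i k \<omega>
    unfolding Av_def using LX LY by simp
  have LB: "C.L (Bv a k) \<omega> = (if k < a then VX \<omega> else VY \<omega>)" for a k \<omega>
    unfolding Bv_def using LX LY by simp
  define mono where "mono i j a b \<omega> = VX \<omega> ^ i * cnj (VY \<omega>) ^ j * cnj (VX \<omega>) ^ a * VY \<omega> ^ b" for i j a b \<omega>
  have mono_int: "mono i j a b \<omega> = C.integrand (i + b) (Av i) (a + j) (Bv a) \<omega>" for i j a b \<omega>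
  proof -
    have "(\<Prod>k<i + b. C.L (Av i k) \<omega>) = VX \<omega> ^ i * VY \<omega> ^ b"
      unfolding LA by (rule prod_split_if)
    moreover have "(\<Prod>k<a + j. cnj (C.L (Bv a k) \<omega>)) = cnj (VX \<omega>) ^ a * cnj (VY \<omega>) ^ j"
    proof -
      have "(\<Prod>k<a + j. cnj (C.L (Bv a k) \<omega>)) = (\<Prod>k<a + j. if k < a then cnj (VX \<omega>) else cnj (VY \<omega>))"
        unfolding LB by (intro prod.cong) auto
      thus ?thesis by (simp only: prod_split_if)
    qed
    ultimately show ?thesis unfolding mono_def C.integrand_def by (simp add: mult_ac)
  qed
  have int_mono: "integrable M (mono i j a b)" for i j a b
    unfolding mono_int[abs_def] by (rule C.integrable_integrand)
  define EM where "EM i j a b = (LINT \<omega>|M. mono i j a b \<omega>)" for i j a b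
  have EM_F: "EM i j a b = C.F (i + b) (Av i) (a + j) (Bv a)" for i j a b
    unfolding EM_def C.F_def mono_int ..
  have EM0: "i + b \<noteq> a + j \<Longrightarrow> EM i j a b = 0" for i j a b
    unfolding EM_F C.F_eq_G C.G_def by simp
  have mom2: "(LINT \<omega>|M. C.L u \<omega> * cnj (C.L w \<omega>)) = C.cv u w" for u w
  proof -
    have "(LINT \<omega>|M. C.L u \<omega> * cnj (C.L w \<omega>)) = C.F 1 (\<lambda>_. u) 1 (\<lambda>_. w)"
      unfolding C.F_def C.integrand_def by simp
    also have "\<dots> = C.G 1 (\<lambda>_. u) 1 (\<lambda>_. w)" by (rule C.F_eq_G)
    also have "\<dots> = C.cv u w" unfolding C.G_def using card_permutations[of "{..<1::nat}" 1] by simp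
    finally show ?thesis .
  qed
  have pair: "(LINT \<omega>|M. listA VX VY t i p \<omega> * listB VX VY t j k \<omega>) = C.cv (Av i p) (Bv (t - j) k)" for t i j p k
  proof -
    have "(\<lambda>\<omega>. listA VX VY t i p \<omega> * listB VX VY t j k \<omega>) = (\<lambda>\<omega>. C.L (Av i p) \<omega> * cnj (C.L (Bv (t - j) k) \<omega>))"
      unfolding listA_def listB_def LA LB by (auto simp: fun_eq_iff)
    thus ?thesis using mom2 by simp
  qed
  define T where "T t i j = of_nat ((m choose i) * (m choose j) * (n choose (t - j)) * (n choose (t - i)))
       * muX ^ (m - i) * cnj (muY ^ (m - j)) * cnj (muX ^ (n + j - t)) * muY ^ (n + i - t)
       * (\<Sum>\<pi> | \<pi> permutes {..<t}.
            \<Prod>k<t. (LINT \<omega>|M. listA VX VY t i (\<pi> k) \<omega> * listB VX VY t j k \<omega>))" for t i j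
  have T_EM: "T t i j = of_nat ((m choose i) * (m choose j) * (n choose (t - j)) * (n choose (t - i)))
       * muX ^ (m - i) * cnj (muY ^ (m - j)) * cnj (muX ^ (n + j - t)) * muY ^ (n + i - t) * EM i j (t - j) (t - i)"
    if "i \<le> t" "j \<le> t" for t i j
  proof -
    have "(\<Sum>\<pi> | \<pi> permutes {..<t}. \<Prod>k<t. (LINT \<omega>|M. listA VX VY t i (\<pi> k) \<omega> * listB VX VY t j k \<omega>))
        = C.G t (Av i) t (Bv (t - j))" unfolding pair C.G_def by simp
    also have "\<dots> = C.F t (Av i) t (Bv (t - j))" by (rule C.F_eq_G[symmetric])
    also have "\<dots> = EM i j (t - j) (t - i)" unfolding EM_F using that by simp
    finally show ?thesis unfolding T_def by simp
  qed
  define cf where "cf i j a b = of_nat ((m choose i) * (m choose j) * (n choose a) * (n choose b))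
     * muX ^ (m - i) * cnj muY ^ (m - j) * cnj muX ^ (n - a) * muY ^ (n - b)" for i j a b
  have pw: "((muX + VX \<omega>) * cnj (muY + VY \<omega>)) ^ m * cnj (((muX + VX \<omega>) * cnj (muY + VY \<omega>)) ^ n)
     = (\<Sum>i\<le>m. \<Sum>j\<le>m. \<Sum>b\<le>n. \<Sum>a\<le>n. cf i j a b * mono i j a b \<omega>)" for \<omega>
  proof -
    let ?x = "VX \<omega>" and ?y = "VY \<omega>"
    have "((muX + ?x) * cnj (muY + ?y)) ^ m * cnj (((muX + ?x) * cnj (muY + ?y)) ^ n)
       = (?x + muX) ^ m * ((cnj ?y + cnj muY) ^ m * ((?y + muY) ^ n * (cnj ?x + cnj muX) ^ n))"
      by (simp add: power_mult_distrib add.commute mult_ac)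
    also have "\<dots> = (\<Sum>i\<le>m. of_nat (m choose i) * ?x ^ i * muX ^ (m - i)) *
        ((\<Sum>j\<le>m. of_nat (m choose j) * cnj ?y ^ j * cnj muY ^ (m - j)) *
        ((\<Sum>b\<le>n. of_nat (n choose b) * ?y ^ b * muY ^ (n - b)) *
         (\<Sum>a\<le>n. of_nat (n choose a) * cnj ?x ^ a * cnj muX ^ (n - a))))"
      by (simp only: binomial_ring)
    also have "\<dots> = (\<Sum>i\<le>m. \<Sum>j\<le>m. \<Sum>b\<le>n. \<Sum>a\<le>n.
        (of_nat (m choose i) * ?x ^ i * muX ^ (m - i)) *
        ((of_nat (m choose j) * cnj ?y ^ j * cnj muY ^ (m - j)) *
        ((of_nat (n choose b) * ?y ^ b * muY ^ (n - b)) *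
         (of_nat (n choose a) * cnj ?x ^ a * cnj muX ^ (n - a)))))"
      by (simp only: sum_distrib_right, simp only: sum_distrib_left)
    also have "\<dots> = (\<Sum>i\<le>m. \<Sum>j\<le>m. \<Sum>b\<le>n. \<Sum>a\<le>n. cf i j a b * mono i j a b \<omega>)"
      unfolding cf_def mono_def by (intro sum.cong refl) (simp add: mult_ac)
    finally show ?thesis .
  qed
  have "(LINT \<omega>|M. ((muX + VX \<omega>) * cnj (muY + VY \<omega>)) ^ m * cnj (((muX + VX \<omega>) * cnj (muY + VY \<omega>)) ^ n))
     = (LINT \<omega>|M. (\<Sum>i\<le>m. \<Sum>j\<le>m. \<Sum>b\<le>n. \<Sum>a\<le>n. cf i j a b * mono i j a b \<omega>))"
    unfolding pw ..
  also have "\<dots> = (\<Sum>i\<le>m. \<Sum>j\<le>m. \<Sum>b\<le>n. \<Sum>a\<le>n. cf i j a b * EM i j a b)"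
    unfolding EM_def by (simp add: int_mono integrable_sum)
  also have "\<dots> = (\<Sum>i\<le>m. \<Sum>j\<le>m. \<Sum>b\<le>n. \<Sum>a\<le>n. if i + b = a + j then cf i j a b * EM i j a b else 0)"
    by (intro sum.cong refl) (auto simp: EM0)
  also have "\<dots> = (\<Sum>i\<le>m. \<Sum>j\<le>m. \<Sum>b\<le>n. if j \<le> i + b \<and> i + b - j \<le> n then cf i j (i + b - j) b * EM i j (i + b - j) b else 0)"
    by (simp only: sum_delta_a)
  also have "\<dots> = (\<Sum>i\<le>m. \<Sum>j\<le>m. \<Sum>b\<le>n. if j \<le> i + b then T (i + b) i j else 0)"
  proof (intro sum.cong refl)
    fix i j b
    show "(if j \<le> i + b \<and> i + b - j \<le> n then cf i j (i + b - j) b * EM i j (i + b - j) b else 0)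
        = (if j \<le> i + b then T (i + b) i j else 0)"
    proof (cases "j \<le> i + b")
      case False thus ?thesis by simp
    next
      case True
      have TE: "T (i + b) i j = of_nat ((m choose i) * (m choose j) * (n choose (i + b - j)) * (n choose b))
       * muX ^ (m - i) * cnj (muY ^ (m - j)) * cnj (muX ^ (n + j - (i + b))) * muY ^ (n - b) * EM i j (i + b - j) b"
        using T_EM[of i "i + b" j] True by simp
      show ?thesis
      proof (cases "i + b - j \<le> n")
        case True2: True
        have "n + j - (i + b) = n - (i + b - j)" using True True2 by arith
        thus ?thesis using True True2 unfolding TE cf_def by (simp add: mult_ac)
      next
        case False
        thus ?thesis using True unfolding TE by simp
      qed
    qed
  qed
  also have "\<dots> = (\<Sum>t\<le>m + n. \<Sum>i\<le>t. \<Sum>j\<le>t. T t i j)"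
    by (rule reindex_main) (auto simp: T_def)
  finally show ?thesis unfolding T_def .
qed



end
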